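(* Let $M$ be a quasi-pseudo principally injective right $R$-module. Then $M$ is continuous if and only if $M$ is quasi-continuous.
   Context: All rings are associative with identity and all modules are unitary right $R$-modules. A submodule $N$ of $M$ is called $M$-cyclic if $N\cong M/L$ for some submodule $L$ of $M$ (equivalently, $N$ is the image of an endomorphism of $M$). $M$ is quasi-pseudo principally injective if for every $M$-cyclic submodule $A$ of $M$, every $R$-monomorphism $A\to M$ extends to an $R$-endomorphism of $M$. Conditions: (C$_1$) every submodule of $M$ is essential in a direct summand of $M$; (C$_2$) every submodule of $M$ isomorphic to a direct summand of $M$ is itself a direct summand of $M$; (C$_3$) if $A,B$ are direct summands of $M$ with $A\cap B=0$ then $A\oplus B$ is a direct summand of $M$. $M$ is continuous if it satisfies (C$_1$) and (C$_2$), and quasi-continuous if it satisfies (C$_1$) and (C$_3$). *)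

theory Defs
  imports "HOL-Algebra.Module"
begin

text \<open>We reuse the HOL-Algebra record type of modules; the right action x*r is written
  smult M r x.  Only the additive and scalar fields of M are used.\<close>

definition right_module :: "('a, 'c) ring_scheme \<Rightarrow> ('a, 'm) module \<Rightarrow> bool" where
  "right_module R M \<longleftrightarrow> ring R \<and> abelian_group M \<and>
     (\<forall>r\<in>carrier R. \<forall>x\<in>carrier M. smult M r x \<in> carrier M) \<and>
     (\<forall>r\<in>carrier R. \<forall>x\<in>carrier M. \<forall>y\<in>carrier M.
         smult M r (x \<oplus>\<^bsub>M\<^esub> y) = smult M r x \<oplus>\<^bsub>M\<^esub> smult M r y) \<and>
     (\<forall>r\<in>carrier R. \<forall>s\<in>carrier R. \<forall>x\<in>carrier M.
         smult M (r \<oplus>\<^bsub>R\<^esub> s) x = smult M r x \<oplus>\<^bsub>M\<^esub> smult M s x) \<and>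
     (\<forall>r\<in>carrier R. \<forall>s\<in>carrier R. \<forall>x\<in>carrier M.
         smult M s (smult M r x) = smult M (r \<otimes>\<^bsub>R\<^esub> s) x) \<and>
     (\<forall>x\<in>carrier M. smult M \<one>\<^bsub>R\<^esub> x = x)"

definition is_submodule :: "('a, 'c) ring_scheme \<Rightarrow> ('a, 'm) module \<Rightarrow> 'm set \<Rightarrow> bool" where
  "is_submodule R M N \<longleftrightarrow> N \<subseteq> carrier M \<and> \<zero>\<^bsub>M\<^esub> \<in> N \<and>
     (\<forall>x\<in>N. \<forall>y\<in>N. x \<oplus>\<^bsub>M\<^esub> y \<in> N) \<and>
     (\<forall>x\<in>N. \<ominus>\<^bsub>M\<^esub> x \<in> N) \<and>
     (\<forall>r\<in>carrier R. \<forall>x\<in>N. smult M r x \<in> N)"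

definition linear_on :: "('a, 'c) ring_scheme \<Rightarrow> ('a, 'm) module \<Rightarrow> 'm set \<Rightarrow> ('m \<Rightarrow> 'm) \<Rightarrow> bool" where
  "linear_on R M A f \<longleftrightarrow> (\<forall>x\<in>A. f x \<in> carrier M) \<and>
     (\<forall>x\<in>A. \<forall>y\<in>A. f (x \<oplus>\<^bsub>M\<^esub> y) = f x \<oplus>\<^bsub>M\<^esub> f y) \<and>
     (\<forall>r\<in>carrier R. \<forall>x\<in>A. f (smult M r x) = smult M r (f x))"

definition endomorphism :: "('a, 'c) ring_scheme \<Rightarrow> ('a, 'm) module \<Rightarrow> ('m \<Rightarrow> 'm) \<Rightarrow> bool" where
  "endomorphism R M f \<longleftrightarrow> linear_on R M (carrier M) f"

definition iso_submodules :: "('a, 'c) ring_scheme \<Rightarrow> ('a, 'm) module \<Rightarrow> 'm set \<Rightarrow> 'm set \<Rightarrow> bool" where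
  "iso_submodules R M A B \<longleftrightarrow> (\<exists>f. linear_on R M A f \<and> bij_betw f A B)"

text \<open>N is M-cyclic: N is isomorphic to a factor module M/L, i.e. N is the image of an
  endomorphism of M.\<close>
definition M_cyclic :: "('a, 'c) ring_scheme \<Rightarrow> ('a, 'm) module \<Rightarrow> 'm set \<Rightarrow> bool" where
  "M_cyclic R M N \<longleftrightarrow> is_submodule R M N \<and> (\<exists>f. endomorphism R M f \<and> f ` carrier M = N)"

definition msum :: "('a, 'm) module \<Rightarrow> 'm set \<Rightarrow> 'm set \<Rightarrow> 'm set" where
  "msum M A B = {a \<oplus>\<^bsub>M\<^esub> b | a b. a \<in> A \<and> b \<in> B}"

definition direct_summand :: "('a, 'c) ring_scheme \<Rightarrow> ('a, 'm) module \<Rightarrow> 'm set \<Rightarrow> bool" where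
  "direct_summand R M A \<longleftrightarrow> is_submodule R M A \<and>
     (\<exists>B. is_submodule R M B \<and> A \<inter> B = {\<zero>\<^bsub>M\<^esub>} \<and> msum M A B = carrier M)"

definition essential_in :: "('a, 'c) ring_scheme \<Rightarrow> ('a, 'm) module \<Rightarrow> 'm set \<Rightarrow> 'm set \<Rightarrow> bool" where
  "essential_in R M N K \<longleftrightarrow> is_submodule R M N \<and> is_submodule R M K \<and> N \<subseteq> K \<and>
     (\<forall>X. is_submodule R M X \<and> X \<subseteq> K \<and> X \<inter> N = {\<zero>\<^bsub>M\<^esub>} \<longrightarrow> X = {\<zero>\<^bsub>M\<^esub>})"

definition quasi_pseudo_principally_injective :: "('a, 'c) ring_scheme \<Rightarrow> ('a, 'm) module \<Rightarrow> bool" where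
  "quasi_pseudo_principally_injective R M \<longleftrightarrow>
     (\<forall>A f. M_cyclic R M A \<and> linear_on R M A f \<and> inj_on f A \<longrightarrow>
        (\<exists>g. endomorphism R M g \<and> (\<forall>x\<in>A. g x = f x)))"

definition C1 :: "('a, 'c) ring_scheme \<Rightarrow> ('a, 'm) module \<Rightarrow> bool" where
  "C1 R M \<longleftrightarrow> (\<forall>N. is_submodule R M N \<longrightarrow> (\<exists>K. direct_summand R M K \<and> essential_in R M N K))"

definition C2 :: "('a, 'c) ring_scheme \<Rightarrow> ('a, 'm) module \<Rightarrow> bool" where
  "C2 R M \<longleftrightarrow> (\<forall>A B. is_submodule R M A \<and> direct_summand R M B \<and> iso_submodules R M A B
      \<longrightarrow> direct_summand R M A)"

definition C3 :: "('a, 'c) ring_scheme \<Rightarrow> ('a, 'm) module \<Rightarrow> bool" where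
  "C3 R M \<longleftrightarrow> (\<forall>A B. direct_summand R M A \<and> direct_summand R M B \<and> A \<inter> B = {\<zero>\<^bsub>M\<^esub>}
      \<longrightarrow> direct_summand R M (msum M A B))"

definition continuous_module :: "('a, 'c) ring_scheme \<Rightarrow> ('a, 'm) module \<Rightarrow> bool" where
  "continuous_module R M \<longleftrightarrow> C1 R M \<and> C2 R M"

definition quasi_continuous_module :: "('a, 'c) ring_scheme \<Rightarrow> ('a, 'm) module \<Rightarrow> bool" where
  "quasi_continuous_module R M \<longleftrightarrow> C1 R M \<and> C3 R M"

end

theory Submission
  imports Defs
begin


locale rmod =
  fixes R :: "('a, 'c) ring_scheme" and M :: "('a, 'm) module"
  assumes rm: "right_module R M"
begin

sublocale abelian_group M using rm unfolding right_module_def by blast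

lemma sm_closed: "r \<in> carrier R \<Longrightarrow> x \<in> carrier M \<Longrightarrow> smult M r x \<in> carrier M"
  using rm unfolding right_module_def by blast
lemma sm_add: "r \<in> carrier R \<Longrightarrow> x \<in> carrier M \<Longrightarrow> y \<in> carrier M \<Longrightarrow>
   smult M r (x \<oplus>\<^bsub>M\<^esub> y) = smult M r x \<oplus>\<^bsub>M\<^esub> smult M r y"
  using rm unfolding right_module_def by blast

lemma sub_carrier: "is_submodule R M A \<Longrightarrow> A \<subseteq> carrier M"
  unfolding is_submodule_def by blast
lemma sub_zero: "is_submodule R M A \<Longrightarrow> \<zero>\<^bsub>M\<^esub> \<in> A"
  unfolding is_submodule_def by blast
lemma sub_add: "is_submodule R M A \<Longrightarrow> x \<in> A \<Longrightarrow> y \<in> A \<Longrightarrow> x \<oplus>\<^bsub>M\<^esub> y \<in> A"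
  unfolding is_submodule_def by blast
lemma sub_neg: "is_submodule R M A \<Longrightarrow> x \<in> A \<Longrightarrow> \<ominus>\<^bsub>M\<^esub> x \<in> A"
  unfolding is_submodule_def by blast
lemma sub_sm: "is_submodule R M A \<Longrightarrow> r \<in> carrier R \<Longrightarrow> x \<in> A \<Longrightarrow> smult M r x \<in> A"
  unfolding is_submodule_def by blast
lemma sub_minus: "is_submodule R M A \<Longrightarrow> x \<in> A \<Longrightarrow> y \<in> A \<Longrightarrow> x \<ominus>\<^bsub>M\<^esub> y \<in> A"
  by (simp add: minus_eq sub_add sub_neg)
lemma sub_in: "is_submodule R M A \<Longrightarrow> x \<in> A \<Longrightarrow> x \<in> carrier M"
  using sub_carrier by blast

lemma sub_carrier_M: "is_submodule R M (carrier M)"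
  unfolding is_submodule_def using sm_closed by auto
lemma sub_Int: "is_submodule R M A \<Longrightarrow> is_submodule R M B \<Longrightarrow> is_submodule R M (A \<inter> B)"
  unfolding is_submodule_def by auto
lemma sub_zero_set: "is_submodule R M {\<zero>\<^bsub>M\<^esub>}"
  unfolding is_submodule_def
  by (auto simp: sm_closed) (metis sm_add l_zero zero_closed sm_closed add.r_cancel_one)

lemma decomp_unique:
  assumes A: "is_submodule R M A" and B: "is_submodule R M B" and AB: "A \<inter> B = {\<zero>\<^bsub>M\<^esub>}"
    and a: "a \<in> A" "a' \<in> A" and b: "b \<in> B" "b' \<in> B"
    and eq: "a \<oplus>\<^bsub>M\<^esub> b = a' \<oplus>\<^bsub>M\<^esub> b'"
  shows "a = a' \<and> b = b'"
proof -
  have c: "a \<in> carrier M" "a' \<in> carrier M" "b \<in> carrier M" "b' \<in> carrier M"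
    using a b A B sub_carrier by blast+
  have e: "a \<ominus>\<^bsub>M\<^esub> a' = b' \<ominus>\<^bsub>M\<^esub> b"
    using eq c
    by (metis (lifting) ext a_assoc a_comm a_inv_closed minus_closed minus_eq r_neg1)
  have "a \<ominus>\<^bsub>M\<^esub> a' \<in> A \<inter> B" using e sub_minus[OF A a] sub_minus[OF B b(2) b(1)] by auto
  hence z: "a \<ominus>\<^bsub>M\<^esub> a' = \<zero>\<^bsub>M\<^esub>" using AB by auto
  hence "a = a'" using c by (metis add.inv_solve_right l_zero minus_eq zero_closed)
  thus ?thesis using eq c by simp
qed

definition dsum where
  "dsum A B \<longleftrightarrow> is_submodule R M A \<and> is_submodule R M B \<and> A \<inter> B = {\<zero>\<^bsub>M\<^esub>}
     \<and> msum M A B = carrier M"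

lemma ds_iff: "direct_summand R M A \<longleftrightarrow> (\<exists>B. dsum A B)"
  unfolding direct_summand_def dsum_def by simp

lemma msum_sub1: assumes "A \<subseteq> carrier M" "B \<subseteq> carrier M"
  shows "msum M A B \<subseteq> msum M B A"
proof
  fix x assume "x \<in> msum M A B"
  then obtain a b where ab: "a \<in> A" "b \<in> B" "x = a \<oplus>\<^bsub>M\<^esub> b" unfolding msum_def by blast
  hence "x = b \<oplus>\<^bsub>M\<^esub> a" using assms a_comm by blast
  thus "x \<in> msum M B A" using ab unfolding msum_def by blast
qed

lemma msum_comm: "A \<subseteq> carrier M \<Longrightarrow> B \<subseteq> carrier M \<Longrightarrow> msum M A B = msum M B A"
  using msum_sub1 by blast

lemma dsum_sym: assumes "dsum A B" shows "dsum B A"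
proof -
  have "A \<subseteq> carrier M" "B \<subseteq> carrier M" using assms unfolding dsum_def by (auto simp: sub_carrier)
  hence "msum M B A = msum M A B" using msum_comm by blast
  thus ?thesis using assms unfolding dsum_def by (simp add: Int_commute)
qed

definition pr where "pr A B x = (SOME a. a \<in> A \<and> (\<exists>b\<in>B. x = a \<oplus>\<^bsub>M\<^esub> b))"

lemma pr_ex:
  assumes d: "dsum A B" and x: "x \<in> carrier M"
  shows "pr A B x \<in> A \<and> (\<exists>b\<in>B. x = pr A B x \<oplus>\<^bsub>M\<^esub> b)"
proof -
  have "\<exists>a. a \<in> A \<and> (\<exists>b\<in>B. x = a \<oplus>\<^bsub>M\<^esub> b)"
    using d x unfolding dsum_def msum_def by blast
  thus ?thesis unfolding pr_def by (rule someI_ex)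
qed

lemma pr_eq:
  assumes d: "dsum A B" and a: "a \<in> A" and b: "b \<in> B"
  shows "pr A B (a \<oplus>\<^bsub>M\<^esub> b) = a"
proof -
  have dd: "is_submodule R M A" "is_submodule R M B" "A \<inter> B = {\<zero>\<^bsub>M\<^esub>}" using d unfolding dsum_def by auto
  have x: "a \<oplus>\<^bsub>M\<^esub> b \<in> carrier M" using a b dd sub_in by auto
  obtain b' where "b' \<in> B" "a \<oplus>\<^bsub>M\<^esub> b = pr A B (a \<oplus>\<^bsub>M\<^esub> b) \<oplus>\<^bsub>M\<^esub> b'"
    "pr A B (a \<oplus>\<^bsub>M\<^esub> b) \<in> A" using pr_ex[OF d x] by blast
  thus ?thesis using decomp_unique[OF dd] a b by metis
qed

lemma pr_A: "dsum A B \<Longrightarrow> a \<in> A \<Longrightarrow> pr A B a = a"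
  using pr_eq[of A B a "\<zero>\<^bsub>M\<^esub>"] unfolding dsum_def
  by (metis sub_zero r_zero sub_in)

lemma pr_B: "dsum A B \<Longrightarrow> b \<in> B \<Longrightarrow> pr A B b = \<zero>\<^bsub>M\<^esub>"
  using pr_eq[of A B "\<zero>\<^bsub>M\<^esub>" b] unfolding dsum_def
  by (metis sub_zero l_zero sub_in)

lemma pr_endo:
  assumes d: "dsum A B" shows "endomorphism R M (pr A B)"
proof -
  have dd: "is_submodule R M A" "is_submodule R M B" "A \<inter> B = {\<zero>\<^bsub>M\<^esub>}" using d unfolding dsum_def by auto
  have cl: "\<forall>x\<in>carrier M. pr A B x \<in> carrier M" using pr_ex[OF d] dd sub_in by blast
  have ad: "pr A B (x \<oplus>\<^bsub>M\<^esub> y) = pr A B x \<oplus>\<^bsub>M\<^esub> pr A B y" if x: "x \<in> carrier M" and y: "y \<in> carrier M" for x y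
  proof -
    obtain b1 where b1: "b1 \<in> B" "x = pr A B x \<oplus>\<^bsub>M\<^esub> b1" and a1: "pr A B x \<in> A" using pr_ex[OF d x] by blast
    obtain b2 where b2: "b2 \<in> B" "y = pr A B y \<oplus>\<^bsub>M\<^esub> b2" and a2: "pr A B y \<in> A" using pr_ex[OF d y] by blast
    have c: "pr A B x \<in> carrier M" "pr A B y \<in> carrier M" "b1 \<in> carrier M" "b2 \<in> carrier M"
      using a1 a2 b1 b2 dd sub_in by auto
    have "(pr A B x \<oplus>\<^bsub>M\<^esub> b1) \<oplus>\<^bsub>M\<^esub> (pr A B y \<oplus>\<^bsub>M\<^esub> b2) = (pr A B x \<oplus>\<^bsub>M\<^esub> pr A B y) \<oplus>\<^bsub>M\<^esub> (b1 \<oplus>\<^bsub>M\<^esub> b2)"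
      using c by (simp add: a_ac)
    hence "x \<oplus>\<^bsub>M\<^esub> y = (pr A B x \<oplus>\<^bsub>M\<^esub> pr A B y) \<oplus>\<^bsub>M\<^esub> (b1 \<oplus>\<^bsub>M\<^esub> b2)"
      using b1(2) b2(2) by metis
    thus ?thesis using pr_eq[OF d sub_add[OF dd(1) a1 a2] sub_add[OF dd(2) b1(1) b2(1)]] by simp
  qed
  have sm: "pr A B (smult M r x) = smult M r (pr A B x)" if r: "r \<in> carrier R" and x: "x \<in> carrier M" for r x
  proof -
    obtain b1 where b1: "b1 \<in> B" "x = pr A B x \<oplus>\<^bsub>M\<^esub> b1" and a1: "pr A B x \<in> A" using pr_ex[OF d x] by blast
    have c: "pr A B x \<in> carrier M" "b1 \<in> carrier M" using a1 b1 dd sub_in by auto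
    have "smult M r x = smult M r (pr A B x) \<oplus>\<^bsub>M\<^esub> smult M r b1"
      using b1 c sm_add r by metis
    thus ?thesis using pr_eq[OF d sub_sm[OF dd(1) r a1] sub_sm[OF dd(2) r b1(1)]] by simp
  qed
  show ?thesis unfolding endomorphism_def linear_on_def using cl ad sm by blast
qed

lemma pr_image: assumes d: "dsum A B" shows "pr A B ` carrier M = A"
proof
  show "pr A B ` carrier M \<subseteq> A" using pr_ex[OF d] by blast
  show "A \<subseteq> pr A B ` carrier M"
  proof
    fix a assume "a \<in> A"
    hence "pr A B a = a" "a \<in> carrier M" using pr_A[OF d] d unfolding dsum_def by (auto simp: sub_in)
    thus "a \<in> pr A B ` carrier M" by (metis image_eqI)
  qed
qed

lemma ds_cyclic: "direct_summand R M A \<Longrightarrow> M_cyclic R M A"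
  unfolding ds_iff M_cyclic_def using pr_endo pr_image dsum_def by metis

lemma lin_cl: "linear_on R M S f \<Longrightarrow> x \<in> S \<Longrightarrow> f x \<in> carrier M"
  unfolding linear_on_def by blast
lemma lin_add: "linear_on R M S f \<Longrightarrow> x \<in> S \<Longrightarrow> y \<in> S \<Longrightarrow> f (x \<oplus>\<^bsub>M\<^esub> y) = f x \<oplus>\<^bsub>M\<^esub> f y"
  unfolding linear_on_def by blast
lemma lin_sm: "linear_on R M S f \<Longrightarrow> r \<in> carrier R \<Longrightarrow> x \<in> S \<Longrightarrow> f (smult M r x) = smult M r (f x)"
  unfolding linear_on_def by blast

lemma lin_zero: assumes f: "linear_on R M S f" and S: "is_submodule R M S"
  shows "f \<zero>\<^bsub>M\<^esub> = \<zero>\<^bsub>M\<^esub>"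
proof -
  have z: "\<zero>\<^bsub>M\<^esub> \<in> S" using S sub_zero by blast
  have "f \<zero>\<^bsub>M\<^esub> = f \<zero>\<^bsub>M\<^esub> \<oplus>\<^bsub>M\<^esub> f \<zero>\<^bsub>M\<^esub>"
    using f z unfolding linear_on_def by (metis l_zero zero_closed)
  moreover have "f \<zero>\<^bsub>M\<^esub> \<in> carrier M" using f z unfolding linear_on_def by blast
  ultimately show ?thesis by (metis add.l_cancel_one)
qed

lemma lin_neg: assumes f: "linear_on R M S f" and S: "is_submodule R M S" and x: "x \<in> S"
  shows "f (\<ominus>\<^bsub>M\<^esub> x) = \<ominus>\<^bsub>M\<^esub> f x"
proof -
  have nx: "\<ominus>\<^bsub>M\<^esub> x \<in> S" using S x sub_neg by blast
  have "f x \<oplus>\<^bsub>M\<^esub> f (\<ominus>\<^bsub>M\<^esub> x) = \<zero>\<^bsub>M\<^esub>"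
    using f x nx lin_zero[OF f S] S unfolding linear_on_def by (metis r_neg sub_in)
  moreover have "f x \<in> carrier M" "f (\<ominus>\<^bsub>M\<^esub> x) \<in> carrier M" using f x nx unfolding linear_on_def by auto
  ultimately show ?thesis by (metis add.inv_equality a_comm)
qed

lemma lin_minus: assumes f: "linear_on R M S f" and S: "is_submodule R M S" and x: "x \<in> S" and y: "y \<in> S"
  shows "f (x \<ominus>\<^bsub>M\<^esub> y) = f x \<ominus>\<^bsub>M\<^esub> f y"
  using f S x y lin_neg[OF f S y] sub_neg[OF S y] unfolding linear_on_def minus_eq by (simp add: minus_eq)

lemma lin_image_sub: assumes f: "linear_on R M S f" and S: "is_submodule R M S"
  shows "is_submodule R M (f ` S)"
  unfolding is_submodule_def
proof (intro conjI ballI)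
  show "f ` S \<subseteq> carrier M" using f unfolding linear_on_def by auto
  show "\<zero>\<^bsub>M\<^esub> \<in> f ` S" using lin_zero[OF f S] sub_zero[OF S] by (metis image_eqI)
  fix x y assume "x \<in> f ` S" "y \<in> f ` S"
  then obtain u v where "u \<in> S" "v \<in> S" "x = f u" "y = f v" by blast
  hence "x \<oplus>\<^bsub>M\<^esub> y = f (u \<oplus>\<^bsub>M\<^esub> v)" using lin_add[OF f] by simp
  thus "x \<oplus>\<^bsub>M\<^esub> y \<in> f ` S" using sub_add[OF S \<open>u \<in> S\<close> \<open>v \<in> S\<close>] by blast
next
  fix x assume "x \<in> f ` S"
  then obtain u where "u \<in> S" "x = f u" by blast
  hence "\<ominus>\<^bsub>M\<^esub> x = f (\<ominus>\<^bsub>M\<^esub> u)" using lin_neg[OF f S] by simp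
  thus "\<ominus>\<^bsub>M\<^esub> x \<in> f ` S" using sub_neg[OF S \<open>u \<in> S\<close>] by blast
next
  fix r x assume r: "r \<in> carrier R" and "x \<in> f ` S"
  then obtain u where "u \<in> S" "x = f u" by blast
  hence "smult M r x = f (smult M r u)" using lin_sm[OF f r] by simp
  thus "smult M r x \<in> f ` S" using sub_sm[OF S r \<open>u \<in> S\<close>] by blast
qed

lemma lin_preimage_sub: assumes f: "linear_on R M S f" and S: "is_submodule R M S"
  and T: "is_submodule R M T"
  shows "is_submodule R M {x\<in>S. f x \<in> T}"
  unfolding is_submodule_def
proof (intro conjI ballI)
  show "{x\<in>S. f x \<in> T} \<subseteq> carrier M" using S sub_in by auto
  show "\<zero>\<^bsub>M\<^esub> \<in> {x\<in>S. f x \<in> T}" using lin_zero[OF f S] sub_zero[OF S] sub_zero[OF T] by auto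
  fix x y assume "x \<in> {x\<in>S. f x \<in> T}" "y \<in> {x\<in>S. f x \<in> T}"
  thus "x \<oplus>\<^bsub>M\<^esub> y \<in> {x\<in>S. f x \<in> T}" using f sub_add[OF S] sub_add[OF T] unfolding linear_on_def by auto
next
  fix x assume "x \<in> {x\<in>S. f x \<in> T}"
  thus "\<ominus>\<^bsub>M\<^esub> x \<in> {x\<in>S. f x \<in> T}" using lin_neg[OF f S] sub_neg[OF S] sub_neg[OF T] by auto
next
  fix r x assume r: "r \<in> carrier R" and "x \<in> {x\<in>S. f x \<in> T}"
  thus "smult M r x \<in> {x\<in>S. f x \<in> T}" using f r sub_sm[OF S] sub_sm[OF T] unfolding linear_on_def by auto
qed

lemma lin_inj: assumes f: "linear_on R M S f" and S: "is_submodule R M S"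
  and k: "\<And>x. x \<in> S \<Longrightarrow> f x = \<zero>\<^bsub>M\<^esub> \<Longrightarrow> x = \<zero>\<^bsub>M\<^esub>"
  shows "inj_on f S"
proof (rule inj_onI)
  fix x y assume x: "x \<in> S" and y: "y \<in> S" and e: "f x = f y"
  have "f (x \<ominus>\<^bsub>M\<^esub> y) = \<zero>\<^bsub>M\<^esub>" using lin_minus[OF f S x y] e f y unfolding linear_on_def
    by (simp add: r_neg minus_eq)
  hence "x \<ominus>\<^bsub>M\<^esub> y = \<zero>\<^bsub>M\<^esub>" using k sub_minus[OF S x y] by blast
  thus "x = y" using x y S sub_in by (metis add.inv_solve_right l_zero minus_eq zero_closed)
qed

lemma lin_inv: assumes f: "linear_on R M S f" and S: "is_submodule R M S" and i: "inj_on f S"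
  shows "linear_on R M (f ` S) (inv_into S f)"
  unfolding linear_on_def
proof (intro conjI ballI)
  fix x assume "x \<in> f ` S"
  thus "inv_into S f x \<in> carrier M" using S sub_in inv_into_into by metis
next
  fix x y assume "x \<in> f ` S" "y \<in> f ` S"
  then obtain u v where uv: "u \<in> S" "v \<in> S" "x = f u" "y = f v" by blast
  hence "x \<oplus>\<^bsub>M\<^esub> y = f (u \<oplus>\<^bsub>M\<^esub> v)" using f unfolding linear_on_def by auto
  thus "inv_into S f (x \<oplus>\<^bsub>M\<^esub> y) = inv_into S f x \<oplus>\<^bsub>M\<^esub> inv_into S f y"
    using uv i sub_add[OF S] by (simp add: inv_into_f_f)
next
  fix r x assume r: "r \<in> carrier R" and "x \<in> f ` S"
  then obtain u where uv: "u \<in> S" "x = f u" by blast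
  hence "smult M r x = f (smult M r u)" using f r unfolding linear_on_def by auto
  thus "inv_into S f (smult M r x) = smult M r (inv_into S f x)"
    using uv i r sub_sm[OF S] by (simp add: inv_into_f_f)
qed

lemma msum_sub: assumes A: "is_submodule R M A" and B: "is_submodule R M B"
  shows "is_submodule R M (msum M A B)"
  unfolding is_submodule_def msum_def
proof (intro conjI ballI)
  show "{a \<oplus>\<^bsub>M\<^esub> b |a b. a \<in> A \<and> b \<in> B} \<subseteq> carrier M" using A B sub_in by auto
  have "\<zero>\<^bsub>M\<^esub> = \<zero>\<^bsub>M\<^esub> \<oplus>\<^bsub>M\<^esub> \<zero>\<^bsub>M\<^esub>" by simp
  thus "\<zero>\<^bsub>M\<^esub> \<in> {a \<oplus>\<^bsub>M\<^esub> b |a b. a \<in> A \<and> b \<in> B}" using sub_zero[OF A] sub_zero[OF B]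
    by blast
  fix x y assume "x \<in> {a \<oplus>\<^bsub>M\<^esub> b |a b. a \<in> A \<and> b \<in> B}" "y \<in> {a \<oplus>\<^bsub>M\<^esub> b |a b. a \<in> A \<and> b \<in> B}"
  then obtain a b a' b' where ab: "a \<in> A" "b \<in> B" "a' \<in> A" "b' \<in> B" "x = a \<oplus>\<^bsub>M\<^esub> b" "y = a' \<oplus>\<^bsub>M\<^esub> b'" by blast
  hence "x \<oplus>\<^bsub>M\<^esub> y = (a \<oplus>\<^bsub>M\<^esub> a') \<oplus>\<^bsub>M\<^esub> (b \<oplus>\<^bsub>M\<^esub> b')"
    using A B sub_in by (simp add: a_ac)
  thus "x \<oplus>\<^bsub>M\<^esub> y \<in> {a \<oplus>\<^bsub>M\<^esub> b |a b. a \<in> A \<and> b \<in> B}" using ab sub_add[OF A] sub_add[OF B] by blast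
next
  fix x assume "x \<in> {a \<oplus>\<^bsub>M\<^esub> b |a b. a \<in> A \<and> b \<in> B}"
  then obtain a b where ab: "a \<in> A" "b \<in> B" "x = a \<oplus>\<^bsub>M\<^esub> b" by blast
  hence "\<ominus>\<^bsub>M\<^esub> x = (\<ominus>\<^bsub>M\<^esub> a) \<oplus>\<^bsub>M\<^esub> (\<ominus>\<^bsub>M\<^esub> b)"
    using A B sub_in by (simp add: minus_add)
  thus "\<ominus>\<^bsub>M\<^esub> x \<in> {a \<oplus>\<^bsub>M\<^esub> b |a b. a \<in> A \<and> b \<in> B}" using ab sub_neg[OF A] sub_neg[OF B] by blast
next
  fix r x assume r: "r \<in> carrier R" and "x \<in> {a \<oplus>\<^bsub>M\<^esub> b |a b. a \<in> A \<and> b \<in> B}"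
  then obtain a b where ab: "a \<in> A" "b \<in> B" "x = a \<oplus>\<^bsub>M\<^esub> b" by blast
  hence "smult M r x = smult M r a \<oplus>\<^bsub>M\<^esub> smult M r b"
    using A B sub_in r sm_add by metis
  thus "smult M r x \<in> {a \<oplus>\<^bsub>M\<^esub> b |a b. a \<in> A \<and> b \<in> B}" using ab r sub_sm[OF A] sub_sm[OF B] by blast
qed

end



context rmod begin

lemma add_minus_cancel: "b \<in> carrier M \<Longrightarrow> c \<in> carrier M \<Longrightarrow> (b \<oplus>\<^bsub>M\<^esub> c) \<ominus>\<^bsub>M\<^esub> b = c"
  by (simp add: minus_eq a_assoc a_comm[of b c] r_neg)

lemma C2_of:
  assumes c1: "C1 R M" and q: "quasi_pseudo_principally_injective R M"
  shows "C2 R M"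
  unfolding C2_def
proof (intro allI impI, elim conjE)
  fix A B assume A: "is_submodule R M A" and Bs: "direct_summand R M B" and iso: "iso_submodules R M A B"
  obtain f where f: "linear_on R M A f" and bij: "bij_betw f A B" using iso unfolding iso_submodules_def by blast
  obtain B' where d: "dsum B B'" using Bs ds_iff by blast
  have Bsub: "is_submodule R M B" and B'sub: "is_submodule R M B'" and BB': "B \<inter> B' = {\<zero>\<^bsub>M\<^esub>}"
    and Bmsum: "msum M B B' = carrier M"
    using d unfolding dsum_def by auto
  have fA: "f ` A = B" and fi: "inj_on f A" using bij unfolding bij_betw_def by auto
  define g where "g = inv_into A f"
  have gl: "linear_on R M B g" using lin_inv[OF f A fi] fA g_def by simp
  have gi: "inj_on g B" using g_def fA by (simp add: inj_on_inv_into)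
  have gB: "g ` B = A" using bij_betw_inv_into[OF bij] g_def unfolding bij_betw_def by simp
  obtain h where h: "endomorphism R M h" and hg: "\<forall>x\<in>B. h x = g x"
    using q ds_cyclic[OF Bs] gl gi unfolding quasi_pseudo_principally_injective_def by blast
  have pe: "endomorphism R M (pr B B')" by (rule pr_endo[OF d])
  have pim: "pr B B' ` carrier M = B" by (rule pr_image[OF d])
  have hB: "h ` B = g ` B" by (rule image_cong[OF refl]) (use hg in blast)
  have "(h \<circ> pr B B') ` carrier M = A"
    by (simp only: image_comp[symmetric] pim hB gB)
  moreover have "endomorphism R M (h \<circ> pr B B')"
    using h pe unfolding endomorphism_def linear_on_def by auto
  ultimately have Acyc: "M_cyclic R M A" using A unfolding M_cyclic_def by blast
  obtain \<phi> where phi: "endomorphism R M \<phi>" and pf: "\<forall>x\<in>A. \<phi> x = f x"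
    using q Acyc f fi unfolding quasi_pseudo_principally_injective_def by blast
  obtain K where Ks: "direct_summand R M K" and ess: "essential_in R M A K" using c1 A unfolding C1_def by blast
  have K: "is_submodule R M K" and AK: "A \<subseteq> K"
    and essX: "\<And>X. is_submodule R M X \<Longrightarrow> X \<subseteq> K \<Longrightarrow> X \<inter> A = {\<zero>\<^bsub>M\<^esub>} \<Longrightarrow> X = {\<zero>\<^bsub>M\<^esub>}"
    using ess unfolding essential_in_def by auto
  have phiK: "linear_on R M K \<phi>" using phi K sub_carrier unfolding endomorphism_def linear_on_def by blast
  have f0: "f \<zero>\<^bsub>M\<^esub> = \<zero>\<^bsub>M\<^esub>" using lin_zero[OF f A] .
  have z0: "\<zero>\<^bsub>M\<^esub> \<in> A" using sub_zero[OF A] .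
  have kerA: "x = \<zero>\<^bsub>M\<^esub>" if "x \<in> A" "f x = \<zero>\<^bsub>M\<^esub>" for x
    using fi that f0 z0 by (metis inj_onD)
  have X: "{x\<in>K. \<phi> x \<in> {\<zero>\<^bsub>M\<^esub>}} = {\<zero>\<^bsub>M\<^esub>}"
  proof (rule essX)
    show "is_submodule R M {x\<in>K. \<phi> x \<in> {\<zero>\<^bsub>M\<^esub>}}" using lin_preimage_sub[OF phiK K sub_zero_set] .
    show "{x\<in>K. \<phi> x \<in> {\<zero>\<^bsub>M\<^esub>}} \<subseteq> K" by blast
    have "x = \<zero>\<^bsub>M\<^esub>" if "x \<in> A" "\<phi> x = \<zero>\<^bsub>M\<^esub>" for x
      using kerA pf that by simp
    moreover have "\<zero>\<^bsub>M\<^esub> \<in> {x\<in>K. \<phi> x \<in> {\<zero>\<^bsub>M\<^esub>}} \<inter> A"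
      using z0 AK f0 pf by auto
    ultimately show "{x\<in>K. \<phi> x \<in> {\<zero>\<^bsub>M\<^esub>}} \<inter> A = {\<zero>\<^bsub>M\<^esub>}"
      by blast
  qed
  have phiinj: "inj_on \<phi> K"
    by (rule lin_inj[OF phiK K]) (use X in blast)
  have X': "{x\<in>K. \<phi> x \<in> B'} = {\<zero>\<^bsub>M\<^esub>}"
  proof (rule essX)
    show "is_submodule R M {x\<in>K. \<phi> x \<in> B'}" using lin_preimage_sub[OF phiK K B'sub] .
    show "{x\<in>K. \<phi> x \<in> B'} \<subseteq> K" by blast
    have "x = \<zero>\<^bsub>M\<^esub>" if "x \<in> A" "\<phi> x \<in> B'" for x
    proof -
      have "f x \<in> B" using fA that by blast
      hence "f x = \<zero>\<^bsub>M\<^esub>" using that pf BB' by auto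
      thus ?thesis using kerA that by blast
    qed
    moreover have "\<zero>\<^bsub>M\<^esub> \<in> {x\<in>K. \<phi> x \<in> B'} \<inter> A"
      using z0 AK f0 pf sub_zero[OF B'sub] by auto
    ultimately show "{x\<in>K. \<phi> x \<in> B'} \<inter> A = {\<zero>\<^bsub>M\<^esub>}"
      by blast
  qed
  have "\<phi> ` A = f ` A" by (rule image_cong[OF refl]) (use pf in blast)
  hence phiA: "\<phi> ` A = B" using fA by simp
  have YB: "\<phi> ` K \<subseteq> B"
  proof
    fix y assume "y \<in> \<phi> ` K"
    then obtain k where k: "k \<in> K" "y = \<phi> k" by blast
    have "y \<in> carrier M" using k phiK unfolding linear_on_def by blast
    then obtain b c where bc: "b \<in> B" "c \<in> B'" "y = b \<oplus>\<^bsub>M\<^esub> c" using Bmsum unfolding msum_def by blast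
    obtain k' where k': "k' \<in> A" "b = \<phi> k'" using phiA bc by blast
    have k'K: "k' \<in> K" using k' AK by blast
    have "\<phi> (k \<ominus>\<^bsub>M\<^esub> k') = y \<ominus>\<^bsub>M\<^esub> b" using lin_minus[OF phiK K k(1) k'K] k k' by simp
    also have "\<dots> = c" using bc sub_in[OF Bsub] sub_in[OF B'sub]
      by (simp add: add_minus_cancel)
    finally have "\<phi> (k \<ominus>\<^bsub>M\<^esub> k') = c" .
    hence "k \<ominus>\<^bsub>M\<^esub> k' \<in> {x\<in>K. \<phi> x \<in> B'}" using bc sub_minus[OF K k(1) k'K] by simp
    hence "\<phi> (k \<ominus>\<^bsub>M\<^esub> k') = \<zero>\<^bsub>M\<^esub>" using X' lin_zero[OF phiK K] by auto
    hence "c = \<zero>\<^bsub>M\<^esub>" using \<open>\<phi> (k \<ominus>\<^bsub>M\<^esub> k') = c\<close> by simp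
    thus "y \<in> B" using bc sub_in[OF Bsub] by simp
  qed
  have "K \<subseteq> A"
  proof
    fix k assume k: "k \<in> K"
    have "\<phi> k \<in> \<phi> ` A" using YB phiA k by blast
    then obtain a where a: "a \<in> A" "\<phi> k = \<phi> a" by blast
    have "a \<in> K" using a AK by blast
    hence "k = a" using inj_onD[OF phiinj a(2) k] by blast
    thus "k \<in> A" using a by simp
  qed
  hence "A = K" using AK by blast
  thus "direct_summand R M A" using Ks by (rule ssubst)
qed

end



context rmod begin

lemma alg4: "a \<in> carrier M \<Longrightarrow> q \<in> carrier M \<Longrightarrow> c \<in> carrier M \<Longrightarrow> e \<in> carrier M \<Longrightarrow>
  a \<oplus>\<^bsub>M\<^esub> (q \<oplus>\<^bsub>M\<^esub> c) = ((a \<ominus>\<^bsub>M\<^esub> e) \<oplus>\<^bsub>M\<^esub> (q \<oplus>\<^bsub>M\<^esub> e)) \<oplus>\<^bsub>M\<^esub> c"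
  by (metis a_assoc a_lcomm add.inv_solve_right' minus_closed minus_eq)

lemma C3_of:
  assumes c2: "C2 R M"
  shows "C3 R M"
  unfolding C3_def
proof (intro allI impI, elim conjE)
  fix A B assume As: "direct_summand R M A" and Bs: "direct_summand R M B" and AB: "A \<inter> B = {\<zero>\<^bsub>M\<^esub>}"
  obtain A' where d: "dsum A A'" using As ds_iff by blast
  have d': "dsum A' A" using dsum_sym[OF d] .
  have Asub: "is_submodule R M A" and A'sub: "is_submodule R M A'" and Amsum: "msum M A A' = carrier M"
    using d unfolding dsum_def by auto
  have Bsub: "is_submodule R M B" using Bs unfolding direct_summand_def by blast
  define p where "p = pr A' A"
  have pe: "endomorphism R M p" using pr_endo[OF d'] p_def by simp
  have pB: "linear_on R M B p" using pe sub_carrier[OF Bsub] unfolding endomorphism_def linear_on_def by blast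
  have pA: "p a = \<zero>\<^bsub>M\<^esub>" if "a \<in> A" for a using pr_B[OF d' that] p_def by simp
  have pA': "p a = a" if "a \<in> A'" for a using pr_A[OF d' that] p_def by simp
  have pex: "p x \<in> A' \<and> (\<exists>a\<in>A. x = p x \<oplus>\<^bsub>M\<^esub> a)" if "x \<in> carrier M" for x
    using pr_ex[OF d' that] p_def by simp
  have pinj: "inj_on p B"
  proof (rule lin_inj[OF pB Bsub])
    fix b assume b: "b \<in> B" and pb: "p b = \<zero>\<^bsub>M\<^esub>"
    obtain a where a: "a \<in> A" "b = p b \<oplus>\<^bsub>M\<^esub> a" using pex sub_in[OF Bsub b] by blast
    have "b = a" using a pb sub_in[OF Asub a(1)] by simp
    thus "b = \<zero>\<^bsub>M\<^esub>" using a b AB by blast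
  qed
  define P where "P = p ` B"
  have Psub: "is_submodule R M P" using lin_image_sub[OF pB Bsub] P_def by simp
  have bijP: "bij_betw p B P" using pinj P_def unfolding bij_betw_def by simp
  have "linear_on R M P (inv_into B p)" using lin_inv[OF pB Bsub pinj] P_def by simp
  moreover have "bij_betw (inv_into B p) P B" using bij_betw_inv_into[OF bijP] .
  ultimately have iso: "iso_submodules R M P B" unfolding iso_submodules_def by blast
  have "direct_summand R M P" using c2 Psub Bs iso unfolding C2_def by blast
  then obtain C where dP: "dsum P C" using ds_iff by blast
  have Csub: "is_submodule R M C" and PC: "P \<inter> C = {\<zero>\<^bsub>M\<^esub>}" and Pmsum: "msum M P C = carrier M"
    using dP unfolding dsum_def by auto
  define D where "D = A' \<inter> C"
  have Dsub: "is_submodule R M D" using sub_Int[OF A'sub Csub] D_def by simp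
  define S where "S = msum M A B"
  have Ssub: "is_submodule R M S" using msum_sub[OF Asub Bsub] S_def by simp
  have "S \<inter> D \<subseteq> {\<zero>\<^bsub>M\<^esub>}"
  proof
    fix y assume y: "y \<in> S \<inter> D"
    then obtain a b where ab: "a \<in> A" "b \<in> B" "y = a \<oplus>\<^bsub>M\<^esub> b" unfolding S_def msum_def by blast
    have "p y = p a \<oplus>\<^bsub>M\<^esub> p b" using ab pe sub_in[OF Asub] sub_in[OF Bsub]
      unfolding endomorphism_def using lin_add by blast
    also have "\<dots> = p b" using pA[OF ab(1)] lin_cl[OF pB ab(2)] by simp
    finally have "p y = p b" .
    moreover have "p y = y" using pA' y D_def by simp
    ultimately have "y = p b" by simp
    hence "y \<in> P" using ab(2) P_def by blast
    hence "y \<in> P \<inter> C" using y D_def by simp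
    thus "y \<in> {\<zero>\<^bsub>M\<^esub>}" using PC by simp
  qed
  moreover have "\<zero>\<^bsub>M\<^esub> \<in> S \<inter> D" using sub_zero[OF Ssub] sub_zero[OF Dsub] by simp
  ultimately have SD: "S \<inter> D = {\<zero>\<^bsub>M\<^esub>}" by blast
  have "carrier M \<subseteq> msum M S D"
  proof
    fix x assume x: "x \<in> carrier M"
    then obtain a a' where aa: "a \<in> A" "a' \<in> A'" "x = a \<oplus>\<^bsub>M\<^esub> a'" using Amsum unfolding msum_def by blast
    have a'c: "a' \<in> carrier M" using sub_in[OF A'sub aa(2)] .
    then obtain q c where qc: "q \<in> P" "c \<in> C" "a' = q \<oplus>\<^bsub>M\<^esub> c" using Pmsum unfolding msum_def by blast
    obtain b where b: "b \<in> B" "q = p b" using qc P_def by blast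
    have bc: "b \<in> carrier M" using sub_in[OF Bsub b(1)] .
    obtain e where e: "e \<in> A" "b = p b \<oplus>\<^bsub>M\<^esub> e" using pex[OF bc] by blast
    have qA': "q \<in> A'" using pex[OF bc] b by simp
    have qcar: "q \<in> carrier M" "c \<in> carrier M" "e \<in> carrier M" "a \<in> carrier M"
      using sub_in[OF A'sub qA'] sub_in[OF Csub qc(2)] sub_in[OF Asub e(1)] sub_in[OF Asub aa(1)] by auto
    have "c = a' \<ominus>\<^bsub>M\<^esub> q" using qc(3) qcar add_minus_cancel by simp
    hence "c \<in> A'" using sub_minus[OF A'sub aa(2) qA'] by simp
    hence cD: "c \<in> D" using qc D_def by simp
    have "x = ((a \<ominus>\<^bsub>M\<^esub> e) \<oplus>\<^bsub>M\<^esub> (q \<oplus>\<^bsub>M\<^esub> e)) \<oplus>\<^bsub>M\<^esub> c"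
      using aa(3) qc(3) alg4[OF qcar(4) qcar(1) qcar(2) qcar(3)] by simp
    also have "q \<oplus>\<^bsub>M\<^esub> e = b" using e b by simp
    finally have xe: "x = ((a \<ominus>\<^bsub>M\<^esub> e) \<oplus>\<^bsub>M\<^esub> b) \<oplus>\<^bsub>M\<^esub> c" .
    have "(a \<ominus>\<^bsub>M\<^esub> e) \<oplus>\<^bsub>M\<^esub> b \<in> S" using sub_minus[OF Asub aa(1) e(1)] b(1)
      unfolding S_def msum_def by blast
    thus "x \<in> msum M S D" using xe cD unfolding msum_def by blast
  qed
  moreover have "msum M S D \<subseteq> carrier M" using sub_carrier[OF msum_sub[OF Ssub Dsub]] .
  ultimately have "msum M S D = carrier M" by blast
  hence "dsum S D" unfolding dsum_def using Ssub Dsub SD by blast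
  thus "direct_summand R M (msum M A B)" using ds_iff S_def by blast
qed

end

theorem theorem2p8:
  fixes R :: "('a, 'c) ring_scheme" and M :: "('a, 'm) module"
  assumes "right_module R M"
    and "quasi_pseudo_principally_injective R M"
  shows "continuous_module R M \<longleftrightarrow> quasi_continuous_module R M"
proof -
  interpret rmod R M by (unfold_locales) (rule assms(1))
  show ?thesis
    unfolding continuous_module_def quasi_continuous_module_def
    using C2_of C3_of assms(2) by blast
qed


end
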